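(* Let $k\ge 3$ and let $p,p'$ be two POPs of size $k$ having the same set $I$ of isolated vertices, with $k-2,k-1,k\notin I$. Suppose that in both $p$ and $p'$, each of the labels $k-1$ and $k$ is greater than every label $x\in[k-2]\setminus I$. Suppose that the subposets of $p$ and $p'$ induced by $[k-2]\setminus I$ coincide, and that $k<_p k-1$ while $k-1<_{p'}k$. Then $p\sim p'$.
   Context: A partially ordered pattern (POP) $p$ of size $k$ is a partial order $\le_p$ on $[k]=\{1,\dots,k\}$. A permutation $\pi=\pi_1\cdots\pi_n$ contains $p$ if there are indices $i_1<\dots<i_k$ with $\pi_{i_j}<\pi_{i_m}$ whenever $j<_p m$; otherwise it avoids $p$. $\mathfrak S_n(p)$ is the set of permutations of $[n]$ avoiding $p$, and $p\sim q$ (Wilf-equivalence) means $|\mathfrak S_n(p)|=|\mathfrak S_n(q)|$ for all $n\ge 1$. A vertex is isolated if it is comparable to no other vertex. *)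

theory Defs
  imports "HOL-Combinatorics.Permutations"
begin

text \<open>A POP of size k is given by its strict order relation lt (j <_p m) on [k] = {1..k}.\<close>
definition is_pop :: "nat \<Rightarrow> (nat \<Rightarrow> nat \<Rightarrow> bool) \<Rightarrow> bool" where
  "is_pop k lt \<longleftrightarrow>
     (\<forall>a b. lt a b \<longrightarrow> a \<in> {1..k} \<and> b \<in> {1..k}) \<and>
     (\<forall>a. \<not> lt a a) \<and>
     (\<forall>a b c. lt a b \<longrightarrow> lt b c \<longrightarrow> lt a c)"

definition pop_contains :: "nat \<Rightarrow> (nat \<Rightarrow> nat) \<Rightarrow> nat \<Rightarrow> (nat \<Rightarrow> nat \<Rightarrow> bool) \<Rightarrow> bool" where
  "pop_contains n pi k lt \<longleftrightarrow>
     (\<exists>i :: nat \<Rightarrow> nat. strict_mono_on {1..k} i \<and> i ` {1..k} \<subseteq> {1..n} \<and>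
        (\<forall>j m. lt j m \<longrightarrow> pi (i j) < pi (i m)))"

definition pop_avoiders :: "nat \<Rightarrow> nat \<Rightarrow> (nat \<Rightarrow> nat \<Rightarrow> bool) \<Rightarrow> (nat \<Rightarrow> nat) set" where
  "pop_avoiders n k lt = {pi. pi permutes {1..n} \<and> \<not> pop_contains n pi k lt}"

definition wilf_equiv :: "nat \<Rightarrow> (nat \<Rightarrow> nat \<Rightarrow> bool) \<Rightarrow> (nat \<Rightarrow> nat \<Rightarrow> bool) \<Rightarrow> bool" where
  "wilf_equiv k p q \<longleftrightarrow> (\<forall>n\<ge>1. card (pop_avoiders n k p) = card (pop_avoiders n k q))"

definition isolated :: "nat \<Rightarrow> (nat \<Rightarrow> nat \<Rightarrow> bool) \<Rightarrow> nat set" where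
  "isolated k lt = {x \<in> {1..k}. \<forall>y. \<not> lt x y \<and> \<not> lt y x}"

end

theory Submission
  imports Defs
begin

definition Gd :: "nat \<Rightarrow> (nat \<Rightarrow> nat \<Rightarrow> bool) \<Rightarrow> nat \<Rightarrow> (nat \<Rightarrow> nat) \<Rightarrow> nat \<Rightarrow> nat \<Rightarrow> bool" where
  "Gd k p n \<pi> a v \<longleftrightarrow> (\<exists>i. strict_mono_on {1..k-2} i \<and> i ` {1..k-2} \<subseteq> {1..n} \<and>
     (\<forall>j\<in>{1..k-2}. \<forall>m\<in>{1..k-2}. p j m \<longrightarrow> \<pi> (i j) < \<pi> (i m)) \<and> i (k-2) < a \<and>
     (\<forall>x\<in>{1..k-2}. p x k \<longrightarrow> \<pi> (i x) < v))"

definition Rd :: "nat \<Rightarrow> (nat \<Rightarrow> nat \<Rightarrow> bool) \<Rightarrow> nat \<Rightarrow> (nat \<Rightarrow> nat) \<Rightarrow> nat set" where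
  "Rd k p n \<pi> = {a\<in>{1..n}. Gd k p n \<pi> a (\<pi> a)}"

definition Cd :: "nat \<Rightarrow> (nat \<Rightarrow> nat \<Rightarrow> bool) \<Rightarrow> nat \<Rightarrow> (nat \<Rightarrow> nat) \<Rightarrow> (nat \<Rightarrow> nat) set" where
  "Cd k p n \<pi> = {\<tau>. \<tau> permutes {1..n} \<and> (\<forall>a\<in>{1..n}. a \<notin> Rd k p n \<pi> \<longrightarrow> \<tau> a = \<pi> a) \<and>
      (\<forall>a\<in>Rd k p n \<pi>. Gd k p n \<pi> a (\<tau> a))}"

definition bad_gt :: "nat \<Rightarrow> (nat \<Rightarrow> nat \<Rightarrow> bool) \<Rightarrow> nat \<Rightarrow> (nat \<Rightarrow> nat) \<Rightarrow> bool" where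
  "bad_gt k p n \<pi> \<longleftrightarrow> (\<exists>a b. 1 \<le> a \<and> a < b \<and> b \<le> n \<and> \<pi> b < \<pi> a \<and> Gd k p n \<pi> a (\<pi> b))"

definition bad_lt :: "nat \<Rightarrow> (nat \<Rightarrow> nat \<Rightarrow> bool) \<Rightarrow> nat \<Rightarrow> (nat \<Rightarrow> nat) \<Rightarrow> bool" where
  "bad_lt k p n \<pi> \<longleftrightarrow> (\<exists>a b. 1 \<le> a \<and> a < b \<and> b \<le> n \<and> \<pi> a < \<pi> b \<and> Gd k p n \<pi> a (\<pi> a))"

lemma Gd_mono: "Gd k p n \<pi> a v \<Longrightarrow> a \<le> a' \<Longrightarrow> v \<le> v' \<Longrightarrow> Gd k p n \<pi> a' v'"
  unfolding Gd_def by (meson order_less_le_trans)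

lemma swap_sum:
  fixes f g :: "nat \<Rightarrow> nat"
  assumes "finite S" "a \<in> S" "b \<in> S" "a \<noteq> b" "\<forall>x\<in>S. x \<noteq> a \<longrightarrow> x \<noteq> b \<longrightarrow> f x = g x"
  shows "sum f S + (g a + g b) = sum g S + (f a + f b)"
proof -
  have "sum f S = f a + (f b + sum f (S - {a} - {b}))"
    using assms(1-4) sum.remove[of S a f] sum.remove[of "S - {a}" b f] by simp
  moreover have "sum g S = g a + (g b + sum g (S - {a} - {b}))"
    using assms(1-4) sum.remove[of S a g] sum.remove[of "S - {a}" b g] by simp
  moreover have "sum f (S - {a} - {b}) = sum g (S - {a} - {b})"
    using assms(5) by (intro sum.cong) auto
  ultimately show ?thesis by simp
qed

context
  fixes k :: nat and p :: "nat \<Rightarrow> nat \<Rightarrow> bool" and n :: nat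
  assumes k3: "k \<ge> 3"
    and Jk: "\<forall>x\<in>{1..k-2}. \<forall>y\<in>{1..k-2}. p x y \<longrightarrow> p x k \<and> p y k"
begin

lemma i_le_last:
  fixes i :: "nat \<Rightarrow> nat"
  assumes "strict_mono_on {1..k-2} i" "x \<in> {1..k-2}" shows "i x \<le> i (k-2)"
  using k3 assms by (intro strict_mono_on_leD[OF assms(1)]) auto

lemma G_fwd:
  assumes "\<tau> \<in> Cd k p n \<pi>" "Gd k p n \<tau> a v"
  shows "Gd k p n \<pi> a v"
proof -
  obtain i where i: "strict_mono_on {1..k-2} i" "i ` {1..k-2} \<subseteq> {1..n}"
    "\<forall>j\<in>{1..k-2}. \<forall>m\<in>{1..k-2}. p j m \<longrightarrow> \<tau> (i j) < \<tau> (i m)" "i (k-2) < a"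
    "\<forall>x\<in>{1..k-2}. p x k \<longrightarrow> \<tau> (i x) < v"
    using assms(2) unfolding Gd_def by blast
  show ?thesis
  proof (cases "\<exists>x\<in>{1..k-2}. p x k \<and> i x \<in> Rd k p n \<pi>")
    case True
    then obtain x where x: "x\<in>{1..k-2}" "p x k" "i x \<in> Rd k p n \<pi>" by blast
    have "Gd k p n \<pi> (i x) (\<tau> (i x))" using assms(1) x unfolding Cd_def by auto
    moreover have "i x \<le> a" using i_le_last[OF i(1) x(1)] i(4) by simp
    moreover have "\<tau> (i x) \<le> v" using i(5) x by force
    ultimately show ?thesis using Gd_mono by blast
  next
    case False
    have eq: "\<forall>x\<in>{1..k-2}. p x k \<longrightarrow> \<tau> (i x) = \<pi> (i x)"
      using False i(2) assms(1) unfolding Cd_def by blast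
    show ?thesis unfolding Gd_def
    proof (intro exI conjI)
      show "\<forall>j\<in>{1..k-2}. \<forall>m\<in>{1..k-2}. p j m \<longrightarrow> \<pi> (i j) < \<pi> (i m)"
        using i(3) eq Jk by metis
      show "\<forall>x\<in>{1..k-2}. p x k \<longrightarrow> \<pi> (i x) < v" using i(5) eq by metis
    qed (use i in auto)
  qed
qed

lemma G_bwd:
  assumes "\<tau> \<in> Cd k p n \<pi>"
  shows "Gd k p n \<pi> a v \<Longrightarrow> Gd k p n \<tau> a v"
proof (induction v rule: less_induct)
  case (less v)
  obtain i where i: "strict_mono_on {1..k-2} i" "i ` {1..k-2} \<subseteq> {1..n}"
    "\<forall>j\<in>{1..k-2}. \<forall>m\<in>{1..k-2}. p j m \<longrightarrow> \<pi> (i j) < \<pi> (i m)" "i (k-2) < a"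
    "\<forall>x\<in>{1..k-2}. p x k \<longrightarrow> \<pi> (i x) < v"
    using less.prems unfolding Gd_def by blast
  show ?case
  proof (cases "\<exists>x\<in>{1..k-2}. p x k \<and> i x \<in> Rd k p n \<pi>")
    case True
    then obtain x where x: "x\<in>{1..k-2}" "p x k" "i x \<in> Rd k p n \<pi>" by blast
    have "Gd k p n \<pi> (i x) (\<pi> (i x))" using x unfolding Rd_def by auto
    moreover have "i x \<le> a" using i_le_last[OF i(1) x(1)] i(4) by simp
    ultimately have "Gd k p n \<pi> a (\<pi> (i x))" using Gd_mono by blast
    moreover have lt: "\<pi> (i x) < v" using i(5) x by force
    ultimately have "Gd k p n \<tau> a (\<pi> (i x))" using less.IH by blast
    then show ?thesis using Gd_mono lt by (meson less_imp_le order_refl)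
  next
    case False
    have eq: "\<forall>x\<in>{1..k-2}. p x k \<longrightarrow> \<tau> (i x) = \<pi> (i x)"
      using False i(2) assms(1) unfolding Cd_def by blast
    show ?thesis unfolding Gd_def
    proof (intro exI conjI)
      show "\<forall>j\<in>{1..k-2}. \<forall>m\<in>{1..k-2}. p j m \<longrightarrow> \<tau> (i j) < \<tau> (i m)"
        using i(3) eq Jk by metis
      show "\<forall>x\<in>{1..k-2}. p x k \<longrightarrow> \<tau> (i x) < v" using i(5) eq by metis
    qed (use i in auto)
  qed
qed

lemma G_eq: "\<tau> \<in> Cd k p n \<pi> \<Longrightarrow> Gd k p n \<tau> = Gd k p n \<pi>"
  using G_fwd G_bwd by (intro ext iffI) blast+

lemma R_eq: assumes "\<tau> \<in> Cd k p n \<pi>" shows "Rd k p n \<tau> = Rd k p n \<pi>"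
proof -
  have "a \<in> Rd k p n \<tau> \<longleftrightarrow> a \<in> Rd k p n \<pi>" for a
  proof (cases "a \<in> Rd k p n \<pi>")
    case True
    then show ?thesis using assms G_eq[OF assms] unfolding Cd_def Rd_def by auto
  next
    case False
    then show ?thesis using assms G_eq[OF assms] unfolding Cd_def Rd_def by auto
  qed
  then show ?thesis by blast
qed

lemma C_eq: assumes "\<tau> \<in> Cd k p n \<pi>" shows "Cd k p n \<tau> = Cd k p n \<pi>"
  using assms R_eq[OF assms] G_eq[OF assms] unfolding Cd_def by auto

lemma C_refl: "\<pi> permutes {1..n} \<Longrightarrow> \<pi> \<in> Cd k p n \<pi>"
  unfolding Cd_def Rd_def by auto

lemma uniq_aux:
  assumes c1: "\<pi>1 \<in> Cd k p n \<pi>" and c2: "\<pi>2 \<in> Cd k p n \<pi>" and a: "a \<in> {1..n}"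
    and before: "\<forall>c\<in>{1..n}. c < a \<longrightarrow> \<pi>1 c = \<pi>2 c" and lt: "\<pi>1 a < \<pi>2 a"
  shows "bad_gt k p n \<pi>2 \<and> bad_lt k p n \<pi>1"
proof -
  have p1: "\<pi>1 permutes {1..n}" and p2: "\<pi>2 permutes {1..n}" using c1 c2 unfolding Cd_def by auto
  have aR: "a \<in> Rd k p n \<pi>"
  proof (rule ccontr)
    assume "a \<notin> Rd k p n \<pi>"
    then have "\<pi>1 a = \<pi> a" "\<pi>2 a = \<pi> a" using c1 c2 a unfolding Cd_def by auto
    then show False using lt by simp
  qed
  have G1: "Gd k p n \<pi> a (\<pi>1 a)" using c1 aR unfolding Cd_def by auto
  define b where "b = inv \<pi>2 (\<pi>1 a)"
  have b2: "\<pi>2 b = \<pi>1 a" unfolding b_def using permutes_inverses(1)[OF p2] by simp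
  have bS: "b \<in> {1..n}" using b2 a p1 p2 by (metis permutes_in_image)
  have "b \<noteq> a" using b2 lt by auto
  moreover have "\<not> b < a"
  proof
    assume "b < a"
    then have "\<pi>1 b = \<pi>1 a" using before bS b2 by auto
    then show False using \<open>b \<noteq> a\<close> permutes_inj[OF p1] by (auto dest: injD)
  qed
  ultimately have ab: "a < b" by simp
  have "bad_gt k p n \<pi>2" unfolding bad_gt_def
    using a ab bS b2 lt G1 G_eq[OF c2] by (intro exI[of _ a] exI[of _ b]) auto
  define b' where "b' = inv \<pi>1 (\<pi>2 a)"
  have b1: "\<pi>1 b' = \<pi>2 a" unfolding b'_def using permutes_inverses(1)[OF p1] by simp
  have bS': "b' \<in> {1..n}" using b1 a p1 p2 by (metis permutes_in_image)
  have "b' \<noteq> a" using b1 lt by auto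
  moreover have "\<not> b' < a"
  proof
    assume "b' < a"
    then have "\<pi>2 b' = \<pi>2 a" using before bS' b1 by auto
    then show False using \<open>b' \<noteq> a\<close> permutes_inj[OF p2] by (auto dest: injD)
  qed
  ultimately have ab': "a < b'" by simp
  have "bad_lt k p n \<pi>1" unfolding bad_lt_def
    using a ab' bS' b1 lt G1 G_eq[OF c1] by (intro exI[of _ a] exI[of _ b']) auto
  with \<open>bad_gt k p n \<pi>2\<close> show ?thesis by simp
qed

lemma first_diff:
  assumes p1: "\<pi>1 permutes {1..n}" and p2: "\<pi>2 permutes {1..n}" and ne: "\<pi>1 \<noteq> \<pi>2"
  obtains a where "a \<in> {1..n}" "\<forall>c\<in>{1..n}. c < a \<longrightarrow> \<pi>1 c = \<pi>2 c" "\<pi>1 a \<noteq> \<pi>2 a"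
proof -
  let ?D = "{a\<in>{1..n}. \<pi>1 a \<noteq> \<pi>2 a}"
  have "?D \<noteq> {}"
  proof
    assume "?D = {}"
    then have "\<pi>1 x = \<pi>2 x" for x
      using permutes_not_in[OF p1, of x] permutes_not_in[OF p2, of x] by (cases "x \<in> {1..n}") auto
    then show False using ne by auto
  qed
  moreover have fD: "finite ?D" by simp
  ultimately have m1: "Min ?D \<in> ?D" by (metis (no_types, lifting) Min_in)
  have m2: "\<forall>c\<in>?D. Min ?D \<le> c" using Min_le[OF fD] by blast
  have "\<forall>c\<in>{1..n}. c < Min ?D \<longrightarrow> \<pi>1 c = \<pi>2 c"
  proof (intro ballI impI)
    fix c assume "c \<in> {1..n}" "c < Min ?D"
    show "\<pi>1 c = \<pi>2 c"
    proof (rule ccontr)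
      assume "\<pi>1 c \<noteq> \<pi>2 c"
      then have "c \<in> ?D" using \<open>c \<in> {1..n}\<close> by blast
      then have "Min ?D \<le> c" using m2 by blast
      then show False using \<open>c < Min ?D\<close> by linarith
    qed
  qed
  moreover have "Min ?D \<in> {1..n}" "\<pi>1 (Min ?D) \<noteq> \<pi>2 (Min ?D)" using m1 by blast+
  ultimately show ?thesis using that by blast
qed

lemma uniq_gt:
  assumes c1: "\<pi>1 \<in> Cd k p n \<pi>" and c2: "\<pi>2 \<in> Cd k p n \<pi>"
    and n1: "\<not> bad_gt k p n \<pi>1" and n2: "\<not> bad_gt k p n \<pi>2"
  shows "\<pi>1 = \<pi>2"
proof (rule ccontr)
  assume ne: "\<pi>1 \<noteq> \<pi>2"
  have p1: "\<pi>1 permutes {1..n}" and p2: "\<pi>2 permutes {1..n}" using c1 c2 unfolding Cd_def by auto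
  obtain a where a: "a \<in> {1..n}" "\<forall>c\<in>{1..n}. c < a \<longrightarrow> \<pi>1 c = \<pi>2 c" "\<pi>1 a \<noteq> \<pi>2 a"
    using first_diff[OF p1 p2 ne] by blast
  show False
  proof (cases "\<pi>1 a < \<pi>2 a")
    case True
    then show False using uniq_aux[OF c1 c2 a(1,2)] n2 by blast
  next
    case False
    then have "\<pi>2 a < \<pi>1 a" using a(3) by simp
    then show False using uniq_aux[OF c2 c1 a(1)] a(2) n1 by force
  qed
qed

lemma uniq_lt:
  assumes c1: "\<pi>1 \<in> Cd k p n \<pi>" and c2: "\<pi>2 \<in> Cd k p n \<pi>"
    and n1: "\<not> bad_lt k p n \<pi>1" and n2: "\<not> bad_lt k p n \<pi>2"
  shows "\<pi>1 = \<pi>2"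
proof (rule ccontr)
  assume ne: "\<pi>1 \<noteq> \<pi>2"
  have p1: "\<pi>1 permutes {1..n}" and p2: "\<pi>2 permutes {1..n}" using c1 c2 unfolding Cd_def by auto
  obtain a where a: "a \<in> {1..n}" "\<forall>c\<in>{1..n}. c < a \<longrightarrow> \<pi>1 c = \<pi>2 c" "\<pi>1 a \<noteq> \<pi>2 a"
    using first_diff[OF p1 p2 ne] by blast
  show False
  proof (cases "\<pi>1 a < \<pi>2 a")
    case True
    then show False using uniq_aux[OF c1 c2 a(1,2)] n1 by blast
  next
    case False
    then have "\<pi>2 a < \<pi>1 a" using a(3) by simp
    then show False using uniq_aux[OF c2 c1 a(1)] a(2) n2 by force
  qed
qed

definition Sm :: "(nat \<Rightarrow> nat) \<Rightarrow> nat" where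
  "Sm \<sigma> = (\<Sum>i\<in>{1..n}. i * \<sigma> i)"

lemma finite_C: "finite (Cd k p n \<pi>)"
  by (rule finite_subset[OF _ finite_permutations[of "{1..n}"]]) (auto simp: Cd_def)

lemma swap_in_C:
  assumes s: "\<sigma> \<in> Cd k p n \<pi>" and a: "a \<in> {1..n}" and b: "b \<in> {1..n}"
    and aR: "a \<in> Rd k p n \<pi>" and bR: "b \<in> Rd k p n \<pi>"
    and Ga: "Gd k p n \<pi> a (\<sigma> b)" and Gb: "Gd k p n \<pi> b (\<sigma> a)"
  shows "\<sigma> \<circ> transpose a b \<in> Cd k p n \<pi>"
proof -
  have ps: "\<sigma> permutes {1..n}" using s unfolding Cd_def by auto
  have "\<sigma> \<circ> transpose a b permutes {1..n}"
    by (rule permutes_compose[OF permutes_swap_id[OF a b] ps])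
  moreover have "\<forall>c\<in>{1..n}. c \<notin> Rd k p n \<pi> \<longrightarrow> (\<sigma> \<circ> transpose a b) c = \<pi> c"
    using s aR bR unfolding Cd_def by (auto simp: transpose_def)
  moreover have "\<forall>c\<in>Rd k p n \<pi>. Gd k p n \<pi> c ((\<sigma> \<circ> transpose a b) c)"
    using s Ga Gb unfolding Cd_def by (auto simp: transpose_def)
  ultimately show ?thesis unfolding Cd_def by blast
qed

lemma Sm_swap:
  assumes a: "a \<in> {1..n}" and b: "b \<in> {1..n}" and ab: "a \<noteq> b"
  shows "Sm \<sigma> + (a * \<sigma> b + b * \<sigma> a) = Sm (\<sigma> \<circ> transpose a b) + (a * \<sigma> a + b * \<sigma> b)"
proof -
  have "sum (\<lambda>i. i * \<sigma> i) {1..n} + (a * (\<sigma> \<circ> transpose a b) a + b * (\<sigma> \<circ> transpose a b) b)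
     = sum (\<lambda>i. i * (\<sigma> \<circ> transpose a b) i) {1..n} + (a * \<sigma> a + b * \<sigma> b)"
    using swap_sum[of "{1..n}" a b "\<lambda>i. i * \<sigma> i" "\<lambda>i. i * (\<sigma> \<circ> transpose a b) i"] a b ab
    by simp
  then show ?thesis unfolding Sm_def by simp
qed

lemma ex_gt:
  assumes ps: "\<pi> permutes {1..n}"
  shows "\<exists>\<sigma>\<in>Cd k p n \<pi>. \<not> bad_gt k p n \<sigma>"
proof -
  let ?A = "Cd k p n \<pi>"
  have ne: "?A \<noteq> {}" using C_refl[OF ps] by blast
  have fin: "finite (Sm ` ?A)" using finite_C by simp
  have ne': "Sm ` ?A \<noteq> {}" using ne by simp
  have "Max (Sm ` ?A) \<in> Sm ` ?A" by (rule Max_in[OF fin ne'])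
  then obtain \<sigma> where s: "\<sigma> \<in> ?A" "Sm \<sigma> = Max (Sm ` ?A)" by (metis imageE)
  have mx: "Sm \<tau> \<le> Sm \<sigma>" if "\<tau> \<in> ?A" for \<tau> unfolding s(2) using Max_ge[OF fin] that by blast
  have "\<not> bad_gt k p n \<sigma>"
  proof
    assume "bad_gt k p n \<sigma>"
    then obtain a b where ab: "1 \<le> a" "a < b" "b \<le> n" "\<sigma> b < \<sigma> a" "Gd k p n \<sigma> a (\<sigma> b)"
      unfolding bad_gt_def by blast
    have Geq: "Gd k p n \<sigma> = Gd k p n \<pi>" using G_eq[OF s(1)] .
    have Req: "Rd k p n \<sigma> = Rd k p n \<pi>" using R_eq[OF s(1)] .
    have aS: "a \<in> {1..n}" "b \<in> {1..n}" using ab by auto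
    have "Gd k p n \<sigma> a (\<sigma> a)" using ab Gd_mono by (meson less_imp_le order_refl)
    then have aR: "a \<in> Rd k p n \<pi>" using aS Req unfolding Rd_def by auto
    have "Gd k p n \<sigma> b (\<sigma> b)" using ab Gd_mono by (meson less_imp_le order_refl)
    then have bR: "b \<in> Rd k p n \<pi>" using aS Req unfolding Rd_def by auto
    have Ga: "Gd k p n \<pi> a (\<sigma> b)" using ab Geq by simp
    have Gb: "Gd k p n \<pi> b (\<sigma> a)" using ab Geq Gd_mono by (metis less_imp_le)
    have inC: "\<sigma> \<circ> transpose a b \<in> ?A" using swap_in_C[OF s(1) aS aR bR Ga Gb] .
    have "a * \<sigma> a + b * \<sigma> b < a * \<sigma> b + b * \<sigma> a"
    proof -
      define d where "d = b - a"
      define e where "e = \<sigma> a - \<sigma> b"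
      have "b = a + d" "\<sigma> a = \<sigma> b + e" "d > 0" "e > 0" using ab unfolding d_def e_def by auto
      then show ?thesis by (simp add: algebra_simps)
    qed
    then have "Sm \<sigma> < Sm (\<sigma> \<circ> transpose a b)" using Sm_swap[OF aS, of \<sigma>] ab by linarith
    then show False using mx[OF inC] by simp
  qed
  then show ?thesis using s(1) by blast
qed

lemma ex_lt:
  assumes ps: "\<pi> permutes {1..n}"
  shows "\<exists>\<sigma>\<in>Cd k p n \<pi>. \<not> bad_lt k p n \<sigma>"
proof -
  let ?A = "Cd k p n \<pi>"
  have ne: "?A \<noteq> {}" using C_refl[OF ps] by blast
  have fin: "finite (Sm ` ?A)" using finite_C by simp
  have ne': "Sm ` ?A \<noteq> {}" using ne by simp
  have "Min (Sm ` ?A) \<in> Sm ` ?A" by (rule Min_in[OF fin ne'])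
  then obtain \<sigma> where s: "\<sigma> \<in> ?A" "Sm \<sigma> = Min (Sm ` ?A)" by (metis imageE)
  have mn: "Sm \<sigma> \<le> Sm \<tau>" if "\<tau> \<in> ?A" for \<tau> unfolding s(2) using Min_le[OF fin] that by blast
  have "\<not> bad_lt k p n \<sigma>"
  proof
    assume "bad_lt k p n \<sigma>"
    then obtain a b where ab: "1 \<le> a" "a < b" "b \<le> n" "\<sigma> a < \<sigma> b" "Gd k p n \<sigma> a (\<sigma> a)"
      unfolding bad_lt_def by blast
    have Geq: "Gd k p n \<sigma> = Gd k p n \<pi>" using G_eq[OF s(1)] .
    have Req: "Rd k p n \<sigma> = Rd k p n \<pi>" using R_eq[OF s(1)] .
    have aS: "a \<in> {1..n}" "b \<in> {1..n}" using ab by auto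
    have "a \<in> Rd k p n \<sigma>" using ab(5) aS unfolding Rd_def by simp
    then have aR: "a \<in> Rd k p n \<pi>" using Req by simp
    have "Gd k p n \<sigma> b (\<sigma> b)" using Gd_mono[OF ab(5), of b "\<sigma> b"] ab(2,4) by simp
    then have "b \<in> Rd k p n \<sigma>" using aS unfolding Rd_def by simp
    then have bR: "b \<in> Rd k p n \<pi>" using Req by simp
    have Ga: "Gd k p n \<pi> a (\<sigma> b)" using Gd_mono[OF ab(5), of a "\<sigma> b"] ab(4) Geq by simp
    have Gb: "Gd k p n \<pi> b (\<sigma> a)" using Gd_mono[OF ab(5), of b "\<sigma> a"] ab(2) Geq by simp
    have inC: "\<sigma> \<circ> transpose a b \<in> ?A" using swap_in_C[OF s(1) aS aR bR Ga Gb] .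
    have "a * \<sigma> b + b * \<sigma> a < a * \<sigma> a + b * \<sigma> b"
    proof -
      define d where "d = b - a"
      define e where "e = \<sigma> b - \<sigma> a"
      have "b = a + d" "\<sigma> b = \<sigma> a + e" "d > 0" "e > 0" using ab unfolding d_def e_def by auto
      then show ?thesis by (simp add: algebra_simps)
    qed
    then have "Sm (\<sigma> \<circ> transpose a b) < Sm \<sigma>" using Sm_swap[OF aS, of \<sigma>] ab by linarith
    then show False using mn[OF inC] by simp
  qed
  then show ?thesis using s(1) by blast
qed

lemma card_eq:
  "card {\<pi>. \<pi> permutes {1..n} \<and> \<not> bad_gt k p n \<pi>} = card {\<pi>. \<pi> permutes {1..n} \<and> \<not> bad_lt k p n \<pi>}"
    (is "card ?A = card ?B")
proof -
  have fA: "finite ?A" and fB: "finite ?B"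
    by (rule finite_subset[OF _ finite_permutations[of "{1..n}"]]; auto)+
  define f where "f \<pi> = (SOME \<tau>. \<tau> \<in> Cd k p n \<pi> \<and> \<not> bad_lt k p n \<tau>)" for \<pi>
  define g where "g \<pi> = (SOME \<tau>. \<tau> \<in> Cd k p n \<pi> \<and> \<not> bad_gt k p n \<tau>)" for \<pi>
  have f: "f \<pi> \<in> Cd k p n \<pi> \<and> \<not> bad_lt k p n (f \<pi>)" if hp: "\<pi> permutes {1..n}" for \<pi>
  proof -
    obtain \<tau> where "\<tau> \<in> Cd k p n \<pi> \<and> \<not> bad_lt k p n \<tau>" using ex_lt[OF hp] by blast
    then show ?thesis unfolding f_def by (rule someI[where P = "\<lambda>\<tau>. \<tau> \<in> Cd k p n \<pi> \<and> \<not> bad_lt k p n \<tau>"])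
  qed
  have g: "g \<pi> \<in> Cd k p n \<pi> \<and> \<not> bad_gt k p n (g \<pi>)" if hp: "\<pi> permutes {1..n}" for \<pi>
  proof -
    obtain \<tau> where "\<tau> \<in> Cd k p n \<pi> \<and> \<not> bad_gt k p n \<tau>" using ex_gt[OF hp] by blast
    then show ?thesis unfolding g_def by (rule someI[where P = "\<lambda>\<tau>. \<tau> \<in> Cd k p n \<pi> \<and> \<not> bad_gt k p n \<tau>"])
  qed
  have "card ?A \<le> card ?B"
  proof (rule card_inj_on_le[OF _ _ fB])
    show "inj_on f ?A"
    proof (rule inj_onI)
      fix x y assume x: "x \<in> ?A" and y: "y \<in> ?A" and e: "f x = f y"
      have xp: "x permutes {1..n}" and xn: "\<not> bad_gt k p n x" using x by auto
      have yp: "y permutes {1..n}" and yn: "\<not> bad_gt k p n y" using y by auto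
      have fx: "f x \<in> Cd k p n x" using f[OF xp] by blast
      have fy: "f x \<in> Cd k p n y" using f[OF yp] e by simp
      have "Cd k p n x = Cd k p n y" using C_eq[OF fx] C_eq[OF fy] by simp
      then have "x \<in> Cd k p n y" using C_refl[OF xp] by simp
      then show "x = y" using uniq_gt[OF _ C_refl[OF yp] xn yn] by blast
    qed
    show "f ` ?A \<subseteq> ?B"
    proof
      fix t assume "t \<in> f ` ?A"
      then obtain x where x: "x permutes {1..n}" and t: "t = f x" by blast
      have "f x \<in> Cd k p n x" using f[OF x] by blast
      then have "f x permutes {1..n}" unfolding Cd_def by blast
      then show "t \<in> ?B" using f[OF x] t by blast
    qed
  qed
  moreover have "card ?B \<le> card ?A"
  proof (rule card_inj_on_le[OF _ _ fA])
    show "inj_on g ?B"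
    proof (rule inj_onI)
      fix x y assume x: "x \<in> ?B" and y: "y \<in> ?B" and e: "g x = g y"
      have xp: "x permutes {1..n}" and xn: "\<not> bad_lt k p n x" using x by auto
      have yp: "y permutes {1..n}" and yn: "\<not> bad_lt k p n y" using y by auto
      have fx: "g x \<in> Cd k p n x" using g[OF xp] by blast
      have fy: "g x \<in> Cd k p n y" using g[OF yp] e by simp
      have "Cd k p n x = Cd k p n y" using C_eq[OF fx] C_eq[OF fy] by simp
      then have "x \<in> Cd k p n y" using C_refl[OF xp] by simp
      then show "x = y" using uniq_lt[OF _ C_refl[OF yp] xn yn] by blast
    qed
    show "g ` ?B \<subseteq> ?A"
    proof
      fix t assume "t \<in> g ` ?B"
      then obtain x where x: "x permutes {1..n}" and t: "t = g x" by blast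
      have "g x \<in> Cd k p n x" using g[OF x] by blast
      then have "g x permutes {1..n}" unfolding Cd_def by blast
      then show "t \<in> ?A" using g[OF x] t by blast
    qed
  qed
  ultimately show ?thesis by simp
qed

end


lemma split3: "x \<in> {1..k} \<Longrightarrow> (k::nat) \<ge> 3 \<Longrightarrow> x = k \<or> x = k - 1 \<or> x \<in> {1..k-2}"
  by auto

lemma ext_occ:
  fixes i0 :: "nat \<Rightarrow> nat"
  assumes k3: "k \<ge> 3" and sm: "strict_mono_on {1..k-2} i0" and im: "i0 ` {1..k-2} \<subseteq> {1..n}"
    and last: "i0 (k-2) < a" and ab: "a < b" "1 \<le> a" "b \<le> n"
  defines "i \<equiv> (\<lambda>x. if x = k then b else if x = k - 1 then a else i0 x)"
  shows "strict_mono_on {1..k} i" "i ` {1..k} \<subseteq> {1..n}"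
    "\<forall>x\<in>{1..k-2}. i x = i0 x" "i (k-1) = a" "i k = b"
proof -
  have le: "i0 x < a" if "x \<in> {1..k-2}" for x
    using strict_mono_on_leD[OF sm that, of "k-2"] that k3 last by auto
  show "\<forall>x\<in>{1..k-2}. i x = i0 x" "i (k-1) = a" "i k = b" unfolding i_def using k3 by auto
  show "strict_mono_on {1..k} i"
  proof (rule strict_mono_onI)
    fix r s assume r: "r \<in> {1..k}" and s: "s \<in> {1..k}" and rs: "r < s"
    consider "s = k" | "s = k - 1" | "s \<in> {1..k-2}" using split3[OF s k3] by blast
    then show "i r < i s"
    proof cases
      case 1
      then consider "r = k - 1" | "r \<in> {1..k-2}" using split3[OF r k3] rs by force
      then show ?thesis
      proof cases
        case 1 then show ?thesis using \<open>s = k\<close> ab k3 unfolding i_def by auto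
      next
        case 2 then show ?thesis using \<open>s = k\<close> ab k3 le[OF 2] unfolding i_def by auto
      qed
    next
      case 2
      then have "r \<in> {1..k-2}" using split3[OF r k3] rs by force
      then show ?thesis using \<open>s = k - 1\<close> k3 le unfolding i_def by auto
    next
      case 3
      then have "r \<in> {1..k-2}" using r rs by auto
      then show ?thesis using 3 k3 strict_mono_onD[OF sm _ 3 rs] unfolding i_def by auto
    qed
  qed
  show "i ` {1..k} \<subseteq> {1..n}"
  proof
    fix y assume "y \<in> i ` {1..k}"
    then obtain x where x: "x \<in> {1..k}" "y = i x" by blast
    consider "x = k" | "x = k - 1" | "x \<in> {1..k-2}" using split3[OF x(1) k3] by blast
    then show "y \<in> {1..n}"
    proof cases
      case 3
      have "i0 x \<in> {1..n}" using subsetD[OF im imageI[OF 3]] .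
      moreover have "i x = i0 x" using 3 k3 unfolding i_def by auto
      ultimately show ?thesis using x by simp
    qed (use x ab k3 in \<open>auto simp: i_def\<close>)
  qed
qed

lemma char_gt:
  assumes k3: "k \<ge> 3" and pop: "is_pop k p"
    and H1: "\<forall>x\<in>{1..k-2}. \<forall>y. (p x y \<or> p y x) \<longrightarrow> p x (k-1) \<and> p x k"
    and pk: "p k (k - 1)"
  shows "pop_contains n \<pi> k p \<longleftrightarrow> bad_gt k p n \<pi>"
proof
  have irr: "\<And>x. \<not> p x x" and tr: "\<And>x y z. p x y \<Longrightarrow> p y z \<Longrightarrow> p x z"
    and dom: "\<And>x y. p x y \<Longrightarrow> x \<in> {1..k} \<and> y \<in> {1..k}"
    using pop unfolding is_pop_def by blast+
  assume "pop_contains n \<pi> k p"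
  then obtain i where sm: "strict_mono_on {1..k} i" and im: "i ` {1..k} \<subseteq> {1..n}"
    and rel: "\<forall>j m. p j m \<longrightarrow> \<pi> (i j) < \<pi> (i m)" unfolding pop_contains_def by blast
  have kk: "k - 1 \<in> {1..k}" "k \<in> {1..k}" "k - 2 \<in> {1..k}" using k3 by auto
  have "i (k-1) < i k" using strict_mono_onD[OF sm kk(1) kk(2)] k3 by simp
  moreover have "i (k-2) < i (k-1)" using strict_mono_onD[OF sm kk(3) kk(1)] k3 by simp
  moreover have "i (k-1) \<in> {1..n}" "i k \<in> {1..n}"
    using subsetD[OF im imageI[OF kk(1)]] subsetD[OF im imageI[OF kk(2)]] by auto
  moreover have "\<pi> (i k) < \<pi> (i (k-1))" using rel pk by blast
  moreover have "Gd k p n \<pi> (i (k-1)) (\<pi> (i k))" unfolding Gd_def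
  proof (intro exI conjI)
    show "strict_mono_on {1..k-2} i" by (rule monotone_on_subset[OF sm]) auto
    have "{1..k-2} \<subseteq> {1..k}" by auto
    then show "i ` {1..k-2} \<subseteq> {1..n}" using im by (meson image_mono subset_trans)
    show "\<forall>j\<in>{1..k-2}. \<forall>m\<in>{1..k-2}. p j m \<longrightarrow> \<pi> (i j) < \<pi> (i m)" using rel by blast
    show "i (k-2) < i (k-1)" by fact
    show "\<forall>x\<in>{1..k-2}. p x k \<longrightarrow> \<pi> (i x) < \<pi> (i k)" using rel by blast
  qed
  ultimately show "bad_gt k p n \<pi>" unfolding bad_gt_def
    by (intro exI[of _ "i (k-1)"] exI[of _ "i k"]) auto
next
  have irr: "\<And>x. \<not> p x x" and tr: "\<And>x y z. p x y \<Longrightarrow> p y z \<Longrightarrow> p x z"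
    and dom: "\<And>x y. p x y \<Longrightarrow> x \<in> {1..k} \<and> y \<in> {1..k}"
    using pop unfolding is_pop_def by blast+
  assume "bad_gt k p n \<pi>"
  then obtain a b where ab: "1 \<le> a" "a < b" "b \<le> n" "\<pi> b < \<pi> a" and G: "Gd k p n \<pi> a (\<pi> b)"
    unfolding bad_gt_def by blast
  obtain i0 where sm: "strict_mono_on {1..k-2} i0" and im: "i0 ` {1..k-2} \<subseteq> {1..n}"
    and rel: "\<forall>j\<in>{1..k-2}. \<forall>m\<in>{1..k-2}. p j m \<longrightarrow> \<pi> (i0 j) < \<pi> (i0 m)"
    and last: "i0 (k-2) < a" and vals: "\<forall>x\<in>{1..k-2}. p x k \<longrightarrow> \<pi> (i0 x) < \<pi> b"
    using G unfolding Gd_def by blast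
  define i where "i \<equiv> (\<lambda>x. if x = k then b else if x = k - 1 then a else i0 x)"
  note E = ext_occ[OF k3 sm im last ab(2,1,3), folded i_def]
  have ia: "i (k-1) = a" "i k = b" unfolding i_def using k3 by auto
  have i0: "\<forall>x\<in>{1..k-2}. i x = i0 x" unfolding i_def using k3 by auto
  have "\<pi> (i j) < \<pi> (i m)" if pjm: "p j m" for j m
  proof -
    have j: "j \<in> {1..k}" and m: "m \<in> {1..k}" using dom[OF pjm] by auto
    consider "j = k" | "j = k - 1" | "j \<in> {1..k-2}" using split3[OF j k3] by blast
    then show ?thesis
    proof cases
      case 1
      consider "m = k" | "m = k - 1" | "m \<in> {1..k-2}" using split3[OF m k3] by blast
      then show ?thesis
      proof cases
        case 1 then show ?thesis using pjm \<open>j = k\<close> irr by simp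
      next
        case 2 then show ?thesis using \<open>j = k\<close> ia ab by simp
      next
        case 3 then have "p m k" using H1 pjm \<open>j = k\<close> by blast
        then show ?thesis using tr[of k m k] pjm \<open>j = k\<close> irr by blast
      qed
    next
      case 2
      consider "m = k" | "m = k - 1" | "m \<in> {1..k-2}" using split3[OF m k3] by blast
      then show ?thesis
      proof cases
        case 1 then show ?thesis using pjm \<open>j = k - 1\<close> pk tr irr by blast
      next
        case 2 then show ?thesis using pjm \<open>j = k - 1\<close> irr by simp
      next
        case 3 then have "p m (k-1)" using H1 pjm \<open>j = k - 1\<close> by blast
        then show ?thesis using tr[of "k-1" m "k-1"] pjm \<open>j = k - 1\<close> irr by blast
      qed
    next
      case 3
      consider "m = k" | "m = k - 1" | "m \<in> {1..k-2}" using split3[OF m k3] by blast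
      then show ?thesis
      proof cases
        case 1 then show ?thesis using vals 3 pjm i0 ia by simp
      next
        case 2
        have "p j k" using H1 3 pjm by blast
        then show ?thesis using vals 3 i0 ia ab 2 k3 by auto
      next
        case m3: 3 then show ?thesis using rel 3 pjm i0 by simp
      qed
    qed
  qed
  then show "pop_contains n \<pi> k p" unfolding pop_contains_def using E(1,2) by blast
qed

lemma char_lt:
  assumes k3: "k \<ge> 3" and pop: "is_pop k q"
    and EQ: "\<forall>j\<in>{1..k-2}. \<forall>m\<in>{1..k-2}. p j m \<longleftrightarrow> q j m"
    and H1: "\<forall>x\<in>{1..k-2}. \<forall>y. (q x y \<or> q y x) \<longrightarrow> q x (k-1) \<and> q x k \<and> p x k"
    and K: "\<forall>x\<in>{1..k-2}. p x k \<longrightarrow> q x (k-1)"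
    and qk: "q (k - 1) k"
  shows "pop_contains n \<pi> k q \<longleftrightarrow> bad_lt k p n \<pi>"
proof
  assume "pop_contains n \<pi> k q"
  then obtain i where sm: "strict_mono_on {1..k} i" and im: "i ` {1..k} \<subseteq> {1..n}"
    and rel: "\<forall>j m. q j m \<longrightarrow> \<pi> (i j) < \<pi> (i m)" unfolding pop_contains_def by blast
  have kk: "k - 1 \<in> {1..k}" "k \<in> {1..k}" "k - 2 \<in> {1..k}" using k3 by auto
  have "i (k-1) < i k" using strict_mono_onD[OF sm kk(1) kk(2)] k3 by simp
  moreover have "i (k-2) < i (k-1)" using strict_mono_onD[OF sm kk(3) kk(1)] k3 by simp
  moreover have "i (k-1) \<in> {1..n}" "i k \<in> {1..n}"
    using subsetD[OF im imageI[OF kk(1)]] subsetD[OF im imageI[OF kk(2)]] by auto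
  moreover have "\<pi> (i (k-1)) < \<pi> (i k)" using rel qk by blast
  moreover have "Gd k p n \<pi> (i (k-1)) (\<pi> (i (k-1)))" unfolding Gd_def
  proof (intro exI conjI)
    show "strict_mono_on {1..k-2} i" by (rule monotone_on_subset[OF sm]) auto
    have "{1..k-2} \<subseteq> {1..k}" by auto
    then show "i ` {1..k-2} \<subseteq> {1..n}" using im by (meson image_mono subset_trans)
    show "\<forall>j\<in>{1..k-2}. \<forall>m\<in>{1..k-2}. p j m \<longrightarrow> \<pi> (i j) < \<pi> (i m)" using rel EQ by blast
    show "i (k-2) < i (k-1)" by fact
    show "\<forall>x\<in>{1..k-2}. p x k \<longrightarrow> \<pi> (i x) < \<pi> (i (k-1))" using rel K by blast
  qed
  ultimately show "bad_lt k p n \<pi>" unfolding bad_lt_def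
    by (intro exI[of _ "i (k-1)"] exI[of _ "i k"]) auto
next
  have irr: "\<And>x. \<not> q x x" and tr: "\<And>x y z. q x y \<Longrightarrow> q y z \<Longrightarrow> q x z"
    and dom: "\<And>x y. q x y \<Longrightarrow> x \<in> {1..k} \<and> y \<in> {1..k}"
    using pop unfolding is_pop_def by blast+
  assume "bad_lt k p n \<pi>"
  then obtain a b where ab: "1 \<le> a" "a < b" "b \<le> n" "\<pi> a < \<pi> b" and G: "Gd k p n \<pi> a (\<pi> a)"
    unfolding bad_lt_def by blast
  obtain i0 where sm: "strict_mono_on {1..k-2} i0" and im: "i0 ` {1..k-2} \<subseteq> {1..n}"
    and rel: "\<forall>j\<in>{1..k-2}. \<forall>m\<in>{1..k-2}. p j m \<longrightarrow> \<pi> (i0 j) < \<pi> (i0 m)"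
    and last: "i0 (k-2) < a" and vals: "\<forall>x\<in>{1..k-2}. p x k \<longrightarrow> \<pi> (i0 x) < \<pi> a"
    using G unfolding Gd_def by blast
  define i where "i \<equiv> (\<lambda>x. if x = k then b else if x = k - 1 then a else i0 x)"
  note E = ext_occ[OF k3 sm im last ab(2,1,3), folded i_def]
  have ia: "i (k-1) = a" "i k = b" unfolding i_def using k3 by auto
  have i0: "\<forall>x\<in>{1..k-2}. i x = i0 x" unfolding i_def using k3 by auto
  have "\<pi> (i j) < \<pi> (i m)" if pjm: "q j m" for j m
  proof -
    have j: "j \<in> {1..k}" and m: "m \<in> {1..k}" using dom[OF pjm] by auto
    consider "j = k" | "j = k - 1" | "j \<in> {1..k-2}" using split3[OF j k3] by blast
    then show ?thesis
    proof cases
      case 1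
      consider "m = k" | "m = k - 1" | "m \<in> {1..k-2}" using split3[OF m k3] by blast
      then show ?thesis
      proof cases
        case 1 then show ?thesis using pjm \<open>j = k\<close> irr by simp
      next
        case 2 then show ?thesis using pjm \<open>j = k\<close> qk tr irr by blast
      next
        case 3 then have "q m k" using H1 pjm \<open>j = k\<close> by blast
        then show ?thesis using tr[of k m k] pjm \<open>j = k\<close> irr by blast
      qed
    next
      case 2
      consider "m = k" | "m = k - 1" | "m \<in> {1..k-2}" using split3[OF m k3] by blast
      then show ?thesis
      proof cases
        case 1 then show ?thesis using \<open>j = k - 1\<close> ia ab by simp
      next
        case 2 then show ?thesis using pjm \<open>j = k - 1\<close> irr by simp
      next
        case 3 then have "q m (k-1)" using H1 pjm \<open>j = k - 1\<close> by blast
        then show ?thesis using tr[of "k-1" m "k-1"] pjm \<open>j = k - 1\<close> irr by blast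
      qed
    next
      case 3
      have pj: "p j k" using H1 3 pjm by blast
      consider "m = k" | "m = k - 1" | "m \<in> {1..k-2}" using split3[OF m k3] by blast
      then show ?thesis
      proof cases
        case 1 then show ?thesis using vals 3 pj i0 ia ab k3 by auto
      next
        case 2
        then show ?thesis using vals 3 i0 ia pj k3 by auto
      next
        case m3: 3 then show ?thesis using rel 3 pjm i0 EQ by simp
      qed
    qed
  qed
  then show "pop_contains n \<pi> k q" unfolding pop_contains_def using E(1,2) by blast
qed


theorem lemma2p2:
  fixes k :: nat and p p' :: "nat \<Rightarrow> nat \<Rightarrow> bool" and I :: "nat set"
  assumes "k \<ge> 3"
    and "is_pop k p" and "is_pop k p'"
    and "isolated k p = I" and "isolated k p' = I"
    and "k - 2 \<notin> I" and "k - 1 \<notin> I" and "k \<notin> I"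
    and "\<forall>x \<in> {1..k-2} - I. p x (k - 1) \<and> p x k"
    and "\<forall>x \<in> {1..k-2} - I. p' x (k - 1) \<and> p' x k"
    and "\<forall>a \<in> {1..k-2} - I. \<forall>b \<in> {1..k-2} - I. p a b \<longleftrightarrow> p' a b"
    and "p k (k - 1)" and "p' (k - 1) k"
  shows "wilf_equiv k p p'"
proof -
  note k3 = assms(1)
  have nI: "x \<notin> I" if "p x y \<or> p y x" for x y
    using that assms(4) unfolding isolated_def by blast
  have nI': "x \<notin> I" if "p' x y \<or> p' y x" for x y
    using that assms(5) unfolding isolated_def by blast
  have H1: "\<forall>x\<in>{1..k-2}. \<forall>y. (p x y \<or> p y x) \<longrightarrow> p x (k-1) \<and> p x k"
    using nI assms(9) by blast
  have Jk: "\<forall>x\<in>{1..k-2}. \<forall>y\<in>{1..k-2}. p x y \<longrightarrow> p x k \<and> p y k"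
    using H1 by blast
  have EQ: "\<forall>j\<in>{1..k-2}. \<forall>m\<in>{1..k-2}. p j m \<longleftrightarrow> p' j m"
  proof (intro ballI iffI)
    fix j m assume jm: "j \<in> {1..k-2}" "m \<in> {1..k-2}"
    { assume "p j m" then have "j \<notin> I" "m \<notin> I" using nI by blast+
      then show "p' j m" using assms(11) jm \<open>p j m\<close> by blast }
    { assume "p' j m" then have "j \<notin> I" "m \<notin> I" using nI' by blast+
      then show "p j m" using assms(11) jm \<open>p' j m\<close> by blast }
  qed
  have H1': "\<forall>x\<in>{1..k-2}. \<forall>y. (p' x y \<or> p' y x) \<longrightarrow> p' x (k-1) \<and> p' x k \<and> p x k"
    using nI' assms(9,10) by blast
  have K: "\<forall>x\<in>{1..k-2}. p x k \<longrightarrow> p' x (k-1)"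
    using nI assms(10) by blast
  show ?thesis unfolding wilf_equiv_def
  proof (intro allI impI)
    fix n :: nat
    have A: "pop_avoiders n k p = {\<pi>. \<pi> permutes {1..n} \<and> \<not> bad_gt k p n \<pi>}"
      unfolding pop_avoiders_def using char_gt[OF k3 assms(2) H1 assms(12)] by blast
    have B: "pop_avoiders n k p' = {\<pi>. \<pi> permutes {1..n} \<and> \<not> bad_lt k p n \<pi>}"
      unfolding pop_avoiders_def using char_lt[OF k3 assms(3) EQ H1' K assms(13)] by blast
    show "card (pop_avoiders n k p) = card (pop_avoiders n k p')"
      unfolding A B by (rule card_eq[OF k3 Jk])
  qed
qed

end
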